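(* Let $\rho$ be a $d$-dimensional state with $\Delta(\rho)>0$. Then \[ l(\rho)=\max_{i\in[d]}\big|\{j\in[d]:\ |R^\rho_{ij}|=1\}\big| . \]
   Context: Fixed computational basis; $\Delta$ the dephasing map; $\Pi_I=\sum_{i\in I}|i\rangle\langle i|$; $R^\rho=\Delta(\rho)^{-1/2}\rho\Delta(\rho)^{-1/2}$. $l(\rho)=\max\{\mathrm{rk}(\Pi_I\Delta(\rho)\Pi_I):\ I\subseteq[d],\ \mathrm{rk}(\Pi_I\rho\Pi_I)=1\}$. *)

theory Defs
  imports "Jordan_Normal_Form.DL_Rank"
begin

text \<open>Matrices are d x d complex matrices indexed by 0..<d (so [d] = {0..<d}).\<close>

definition quad_form :: "complex mat \<Rightarrow> complex vec \<Rightarrow> complex" where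
  "quad_form A v = conjugate v \<bullet> (A *\<^sub>v v)"

definition hermitian_mat :: "nat \<Rightarrow> complex mat \<Rightarrow> bool" where
  "hermitian_mat d A \<longleftrightarrow> A \<in> carrier_mat d d \<and>
     (\<forall>i<d. \<forall>j<d. A $$ (i, j) = cnj (A $$ (j, i)))"

definition psd_mat :: "nat \<Rightarrow> complex mat \<Rightarrow> bool" where
  "psd_mat d A \<longleftrightarrow> hermitian_mat d A \<and>
     (\<forall>v\<in>carrier_vec d. Im (quad_form A v) = 0 \<and> Re (quad_form A v) \<ge> 0)"

definition pd_mat :: "nat \<Rightarrow> complex mat \<Rightarrow> bool" where
  "pd_mat d A \<longleftrightarrow> hermitian_mat d A \<and>
     (\<forall>v\<in>carrier_vec d. v \<noteq> 0\<^sub>v d \<longrightarrow> Im (quad_form A v) = 0 \<and> Re (quad_form A v) > 0)"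

definition density_mat :: "nat \<Rightarrow> complex mat \<Rightarrow> bool" where
  "density_mat d \<rho> \<longleftrightarrow> psd_mat d \<rho> \<and> (\<Sum>i<d. \<rho> $$ (i, i)) = 1"

definition dephase :: "nat \<Rightarrow> complex mat \<Rightarrow> complex mat" where
  "dephase d \<rho> = mat d d (\<lambda>(i, j). if i = j then \<rho> $$ (i, i) else 0)"

definition proj :: "nat \<Rightarrow> nat set \<Rightarrow> complex mat" where
  "proj d I = mat d d (\<lambda>(i, j). if i = j \<and> i \<in> I then 1 else 0)"

text \<open>Delta(rho)^(-1/2): for the (positive definite) diagonal matrix Delta(rho) this is the
  diagonal matrix with entries 1/sqrt(rho_ii).\<close>
definition dephase_inv_sqrt :: "nat \<Rightarrow> complex mat \<Rightarrow> complex mat" where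
  "dephase_inv_sqrt d \<rho> =
     mat d d (\<lambda>(i, j). if i = j then complex_of_real (1 / sqrt (Re (\<rho> $$ (i, i)))) else 0)"

definition Rmat :: "nat \<Rightarrow> complex mat \<Rightarrow> complex mat" where
  "Rmat d \<rho> = dephase_inv_sqrt d \<rho> * \<rho> * dephase_inv_sqrt d \<rho>"

definition mrank :: "nat \<Rightarrow> complex mat \<Rightarrow> nat" where
  "mrank d A = vec_space.rank d A"

definition l_val :: "nat \<Rightarrow> complex mat \<Rightarrow> nat" where
  "l_val d \<rho> = Max {mrank d (proj d I * dephase d \<rho> * proj d I) | I.
       I \<subseteq> {0..<d} \<and> mrank d (proj d I * \<rho> * proj d I) = 1}"

end

theory Submission
  imports Defs "Jordan_Normal_Form.DL_Rank_Submatrix"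
begin


lemma if_conj_zero: "(if P \<and> Q then a else 0) = (if P then (if Q then a else 0) else 0)" by simp
lemma if_mult_zero: "(if P then x else 0) * (y::'a::semiring_0) = (if P then x * y else 0)" by simp
lemma mult_if_zero: "(y::'a::semiring_0) * (if P then x else 0) = (if P then y * x else 0)" by simp

lemma proj_mult_left:
  assumes "A \<in> carrier_mat d d"
  shows "proj d I * A = mat d d (\<lambda>(i,j). if i \<in> I then A $$ (i,j) else 0)"
proof (rule eq_matI)
  fix i j assume ij: "i < dim_row (mat d d (\<lambda>(i,j). if i \<in> I then A $$ (i,j) else 0))"
     "j < dim_col (mat d d (\<lambda>(i,j). if i \<in> I then A $$ (i,j) else 0))"
  then have "i < d" "j < d" by auto
  then show "(proj d I * A) $$ (i,j) = mat d d (\<lambda>(i,j). if i \<in> I then A $$ (i,j) else 0) $$ (i,j)"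
    using assms by (auto simp: proj_def scalar_prod_def if_conj_zero if_mult_zero mult_if_zero sum.delta sum.delta' cong: if_cong)
qed (use assms in \<open>auto simp: proj_def\<close>)

lemma proj_mult_right:
  assumes "A \<in> carrier_mat d d"
  shows "A * proj d I = mat d d (\<lambda>(i,j). if j \<in> I then A $$ (i,j) else 0)"
proof (rule eq_matI)
  fix i j assume ij: "i < dim_row (mat d d (\<lambda>(i,j). if j \<in> I then A $$ (i,j) else 0))"
     "j < dim_col (mat d d (\<lambda>(i,j). if j \<in> I then A $$ (i,j) else 0))"
  then have "i < d" "j < d" by auto
  then show "(A * proj d I) $$ (i,j) = mat d d (\<lambda>(i,j). if j \<in> I then A $$ (i,j) else 0) $$ (i,j)"
    using assms by (auto simp: proj_def scalar_prod_def if_conj_zero if_mult_zero mult_if_zero sum.delta sum.delta' cong: if_cong)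
qed (use assms in \<open>auto simp: proj_def\<close>)

lemma det2:
  assumes "A \<in> carrier_mat 2 2"
  shows "det A = A $$ (0,0) * A $$ (1,1) - A $$ (0,1) * A $$ (1,0)"
proof -
  have "det A = (\<Sum>j<2. A $$ (0,j) * cofactor A 0 j)" using laplace_expansion_row[OF assms, of 0] by simp
  also have "\<dots> = A $$ (0,0) * cofactor A 0 0 + A $$ (0,1) * cofactor A 0 1"
    by (simp add: numeral_2_eq_2)
  also have "cofactor A 0 0 = A $$ (1,1)" unfolding cofactor_def
    using assms by (subst det_single) (auto simp: mat_delete_def)
  also have "cofactor A 0 1 = - A $$ (1,0)" unfolding cofactor_def
    using assms by (subst det_single) (auto simp: mat_delete_def)
  finally show ?thesis by (simp add: algebra_simps)
qed

lemma rank_ge2: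
  fixes A :: "'a::field mat"
  assumes A: "A \<in> carrier_mat d d" and ij: "i < j" "j < d"
    and nz: "A $$ (i,i) * A $$ (j,j) - A $$ (i,j) * A $$ (j,i) \<noteq> 0"
  shows "2 \<le> vec_space.rank d A"
proof -
  let ?S = "submatrix A {i,j} {i,j}"
  have c1: "card {x. x < d \<and> x \<in> {i,j}} = 2"
  proof -
    have "{x. x < d \<and> x \<in> {i,j}} = {i,j}" using ij by auto
    then show ?thesis using ij by simp
  qed
  have S: "?S \<in> carrier_mat 2 2"
    using dim_submatrix[of A "{i,j}" "{i,j}"] carrier_matD[OF A] c1 by (metis carrier_matI)
  have k0: "card {a\<in>{i,j}. a < i} = 0" using ij by auto
  have k1: "card {a\<in>{i,j}. a < j} = 1"
  proof -
    have "{a\<in>{i,j}. a < j} = {i}" using ij by auto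
    then show ?thesis by simp
  qed
  have dA: "i < dim_row A" "j < dim_row A" "i < dim_col A" "j < dim_col A" using A ij by auto
  have e: "?S $$ (0,0) = A $$ (i,i)" "?S $$ (0,1) = A $$ (i,j)" "?S $$ (1,0) = A $$ (j,i)" "?S $$ (1,1) = A $$ (j,j)"
    using submatrix_index_card[of i A i "{i,j}" "{i,j}"] submatrix_index_card[of i A j "{i,j}" "{i,j}"]
      submatrix_index_card[of j A i "{i,j}" "{i,j}"] submatrix_index_card[of j A j "{i,j}" "{i,j}"]
      dA unfolding k0 k1 by simp_all
  have "det ?S \<noteq> 0" using det2[OF S] e nz by simp
  from vec_space.rank_gt_minor[OF A this] show ?thesis unfolding c1 .
qed

lemma rank_ge1:
  fixes A :: "'a::field mat"
  assumes A: "A \<in> carrier_mat d d" and k: "k < d" and nz: "A $$ (k,k) \<noteq> 0"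
  shows "1 \<le> vec_space.rank d A"
proof -
  let ?S = "submatrix A {k} {k}"
  have c1: "card {x. x < d \<and> x \<in> {k}} = 1"
  proof -
    have "{x. x < d \<and> x \<in> {k}} = {k}" using k by auto
    then show ?thesis by simp
  qed
  have S: "?S \<in> carrier_mat 1 1"
    using dim_submatrix[of A "{k}" "{k}"] carrier_matD[OF A] c1 by (metis carrier_matI)
  have k0: "card {a\<in>{k}. a < k} = 0" by auto
  have e: "?S $$ (0,0) = A $$ (k,k)"
    using submatrix_index_card[of k A k "{k}" "{k}"] A k unfolding k0 by simp
  have "det ?S \<noteq> 0" using det_single[OF S] e nz by simp
  from vec_space.rank_gt_minor[OF A this] show ?thesis unfolding c1 .
qed

lemma rank_diag_ge:
  fixes c :: "nat \<Rightarrow> 'a::field"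
  assumes I: "I \<subseteq> {0..<d}" and nz: "\<And>i. i \<in> I \<Longrightarrow> c i \<noteq> 0"
  shows "card I \<le> vec_space.rank d (mat d d (\<lambda>(i,j). if i = j \<and> i \<in> I then c i else 0))"
proof -
  let ?D = "mat d d (\<lambda>(i,j). if i = j \<and> i \<in> I then c i else 0) :: 'a mat"
  let ?S = "submatrix ?D I I"
  have cI: "{x. x < d \<and> x \<in> I} = I" using I by auto
  have S: "?S \<in> carrier_mat (card I) (card I)"
  proof (rule carrier_matI)
    show "dim_row ?S = card I" by (simp only: dim_submatrix dim_row_mat cI)
    show "dim_col ?S = card I" by (simp only: dim_submatrix dim_col_mat cI)
  qed
  have fin: "finite I" using I finite_subset by blast
  have pk: "pick I a \<in> I" "pick I a < d" if "a < card I" for a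
    using pick_in_set_le[OF that] I by auto
  have pinj: "pick I a \<noteq> pick I b" if "a < card I" "b < card I" "a \<noteq> b" for a b
    using pick_mono_le[OF that(1), of b] pick_mono_le[OF that(2), of a] that by (cases "a < b") auto
  have ent: "?S $$ (a,b) = (if a = b then c (pick I a) else 0)" if "a < card I" "b < card I" for a b
    using submatrix_index[of a ?D I b I] that cI pk[OF that(1)] pk[OF that(2)] pinj[OF that] by auto
  have ut: "upper_triangular ?S"
    unfolding upper_triangular_def using ent S by auto
  have "det ?S = prod_list (diag_mat ?S)" using det_upper_triangular[OF ut S] .
  also have "\<dots> \<noteq> 0"
    unfolding prod_list_zero_iff diag_mat_def using S ent pk nz by auto
  finally have dS: "det ?S \<noteq> 0" .
  have Dc: "?D \<in> carrier_mat d d" by simp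
  from vec_space.rank_gt_minor[OF Dc dS] show ?thesis unfolding cI .
qed

lemma rank_diag_le:
  fixes c :: "nat \<Rightarrow> 'a::field"
  assumes fin: "finite I"
  shows "vec_space.rank d (mat d d (\<lambda>(i,j). if i = j \<and> i \<in> I then c i else 0)) \<le> card I"
  using fin
proof (induction I rule: finite_induct)
  case empty
  have "(mat d d (\<lambda>(i,j). if i = j \<and> i \<in> {} then c i else 0)) = 0\<^sub>m d d" by auto
  then have "vec_space.rank d (mat d d (\<lambda>(i,j). if i = j \<and> i \<in> {} then c i else 0)) = 0"
    using vec_space.rank_0I by metis
  then show ?case unfolding card.empty by (rule eq_imp_le)
next
  case (insert x F)
  let ?D = "\<lambda>I. mat d d (\<lambda>(i,j). if i = j \<and> i \<in> I then c i else 0) :: 'a mat"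
  have eq: "?D (insert x F) = ?D F + ?D {x}" using insert by auto
  have "vec_space.rank d (?D {x}) \<le> 1"
    by (rule vec_space.rank_le_1_product_entries[where f="\<lambda>r. if r = x then c x else 0" and g="\<lambda>r. if r = x then 1 else 0" and nc=d]) auto
  moreover have "vec_space.rank d (?D F + ?D {x}) \<le> vec_space.rank d (?D F) + vec_space.rank d (?D {x})"
    by (rule vec_space.rank_subadditive) auto
  ultimately show ?case using insert eq by simp
qed



definition Bf :: "complex mat \<Rightarrow> nat \<Rightarrow> (nat \<Rightarrow> complex) \<Rightarrow> (nat \<Rightarrow> complex) \<Rightarrow> complex" where
  "Bf A d f g = (\<Sum>l<d. \<Sum>m<d. cnj (f l) * A $$ (l,m) * g m)"

lemma quad_Bf:
  assumes "A \<in> carrier_mat d d"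
  shows "quad_form A (vec d f) = Bf A d f f"
  using assms unfolding quad_form_def Bf_def
  by (auto simp: scalar_prod_def sum_distrib_left mult.assoc lessThan_atLeast0 intro!: sum.cong)

lemma psd_Bf:
  assumes "psd_mat d A"
  shows "Im (Bf A d f f) = 0" "Re (Bf A d f f) \<ge> 0"
  using assms quad_Bf[of A d f] unfolding psd_mat_def hermitian_mat_def
  by (metis vec_carrier)+

lemma Bf_expand:
  "Bf A d (\<lambda>l. u l + t * y l) (\<lambda>m. u m + t * y m) =
   Bf A d u u + t * Bf A d u y + cnj t * Bf A d y u + cnj t * t * Bf A d y y"
  unfolding Bf_def
  by (simp add: algebra_simps sum.distrib sum_distrib_left)

lemma Bf_herm:
  assumes "hermitian_mat d A"
  shows "Bf A d y u = cnj (Bf A d u y)"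
proof -
  have "cnj (Bf A d u y) = (\<Sum>l<d. \<Sum>m<d. u l * cnj (A $$ (l,m)) * cnj (y m))"
    unfolding Bf_def by (simp add: cnj_sum)
  also have "\<dots> = (\<Sum>l<d. \<Sum>m<d. u l * A $$ (m,l) * cnj (y m))"
  proof (intro sum.cong refl)
    fix l m assume "l \<in> {..<d}" "m \<in> {..<d}"
    then have "A $$ (m,l) = cnj (A $$ (l,m))" using assms unfolding hermitian_mat_def by blast
    then show "u l * cnj (A $$ (l,m)) * cnj (y m) = u l * A $$ (m,l) * cnj (y m)" by simp
  qed
  also have "\<dots> = (\<Sum>m<d. \<Sum>l<d. u l * A $$ (m,l) * cnj (y m))"
    by (rule sum.swap)
  also have "\<dots> = (\<Sum>m<d. \<Sum>l<d. cnj (y m) * A $$ (m,l) * u l)"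
    by (intro sum.cong refl) (simp add: mult_ac)
  finally show ?thesis unfolding Bf_def by simp
qed

lemma Bf_zero:
  assumes psd: "psd_mat d A" and z: "Bf A d u u = 0"
  shows "Bf A d u y = 0"
proof -
  have herm: "hermitian_mat d A" using psd unfolding psd_mat_def by blast
  define c where "c = Bf A d u y"
  define b where "b = Re (Bf A d y y)"
  have bb: "Bf A d y y = of_real b" using psd_Bf(1)[OF psd, of y] unfolding b_def by (simp add: complex_eq_iff)
  have b0: "b \<ge> 0" using psd_Bf(2)[OF psd, of y] unfolding b_def .
  define r where "r = b + 1"
  have r0: "r > 0" using b0 unfolding r_def by simp
  define t where "t = - cnj c / of_real r"
  define n where "n = cmod c ^ 2"
  have cc: "c * cnj c = of_real n" unfolding n_def by (rule complex_norm_square[symmetric])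
  have yu: "Bf A d y u = cnj c" unfolding c_def by (rule Bf_herm[OF herm])
  have "Bf A d (\<lambda>l. u l + t * y l) (\<lambda>m. u m + t * y m) = t * c + cnj t * cnj c + cnj t * t * of_real b"
    using Bf_expand[of A d u t y] z yu bb unfolding c_def by simp
  also have "\<dots> = of_real (- n * (b + 2) / r^2)"
  proof -
    have 1: "t * c = of_real (- n / r)" unfolding t_def using cc by (simp add: mult.commute)
    have 2: "cnj t * cnj c = of_real (- n / r)" unfolding t_def using cc by simp
    have 3: "cnj t * t = of_real (n / r ^ 2)" unfolding t_def using cc
      by (simp add: power2_eq_square mult.commute)
    have "t * c + cnj t * cnj c + cnj t * t * of_real b = of_real (- n / r + - n / r + n / r^2 * b)"
      unfolding 1 2 3 by simp
    also have "- n / r + - n / r + n / r^2 * b = - n * (b + 2) / r^2"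
    proof -
      have rb: "b = r - 1" unfolding r_def by simp
      have rn: "r \<noteq> 0" using r0 by simp
      show ?thesis unfolding rb using rn by (simp add: field_simps power2_eq_square)
    qed
    finally show ?thesis .
  qed
  finally have "Re (of_real (- n * (b + 2) / r^2)) \<ge> 0"
    using psd_Bf(2)[OF psd, of "\<lambda>l. u l + t * y l"] by metis
  then have "- n * (b + 2) / r^2 \<ge> 0" by simp
  then have "n * (b + 2) \<le> 0" using r0 by (simp add: divide_nonneg_pos field_simps)
  moreover have "n \<ge> 0" unfolding n_def by simp
  ultimately have "n = 0" using b0 by (smt (verit) mult_pos_pos)
  then show ?thesis unfolding n_def c_def by simp
qed

lemma sum_delta2:
  fixes X :: "nat \<Rightarrow> complex"
  assumes "p < d" "q < d"
  shows "(\<Sum>l<d. (a * (if l = p then 1 else 0) + b * (if l = q then 1 else 0)) * X l) = a * X p + b * X q"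
  using assms by (simp add: distrib_right sum.distrib if_mult_zero mult_if_zero sum.delta)

lemma sum_delta1:
  fixes X :: "nat \<Rightarrow> complex"
  assumes "p < d"
  shows "(\<Sum>l<d. X l * (if l = p then 1 else 0)) = X p"
  using assms by (simp add: mult_if_zero sum.delta')

lemma Bf_left2:
  assumes "p < d" "q < d"
  shows "Bf A d (\<lambda>l. a * (if l = p then 1 else 0) + b * (if l = q then 1 else 0)) g =
    cnj a * (\<Sum>m<d. A $$ (p,m) * g m) + cnj b * (\<Sum>m<d. A $$ (q,m) * g m)"
proof -
  have "Bf A d (\<lambda>l. a * (if l = p then 1 else 0) + b * (if l = q then 1 else 0)) g =
     (\<Sum>l<d. (cnj a * (if l = p then 1 else 0) + cnj b * (if l = q then 1 else 0)) * (\<Sum>m<d. A $$ (l,m) * g m))"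
    unfolding Bf_def by (intro sum.cong refl) (simp add: sum_distrib_left mult.assoc)
  also have "\<dots> = cnj a * (\<Sum>m<d. A $$ (p,m) * g m) + cnj b * (\<Sum>m<d. A $$ (q,m) * g m)"
    by (rule sum_delta2[OF assms])
  finally show ?thesis .
qed

lemma claim:
  assumes psd: "psd_mat d A" and ijk: "i < d" "j < d" "k < d"
    and rel: "A $$ (i,k) * A $$ (k,i) = A $$ (i,i) * A $$ (k,k)"
  shows "A $$ (k,k) * A $$ (i,j) = A $$ (i,k) * A $$ (k,j)"
proof -
  have herm: "\<And>a b. a < d \<Longrightarrow> b < d \<Longrightarrow> cnj (A $$ (a,b)) = A $$ (b,a)"
    using psd unfolding psd_mat_def hermitian_mat_def by (metis complex_cnj_cnj)
  define u where "u = (\<lambda>l. A $$ (k,k) * (if l = i then 1 else 0) + (- A $$ (k,i)) * (if l = k then (1::complex) else 0))"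
  have "Bf A d u u = cnj (A $$ (k,k)) * (\<Sum>m<d. A $$ (i,m) * u m) + cnj (- A $$ (k,i)) * (\<Sum>m<d. A $$ (k,m) * u m)"
    unfolding u_def by (rule Bf_left2[OF ijk(1) ijk(3)])
  also have "(\<Sum>m<d. A $$ (i,m) * u m) = A $$ (k,k) * A $$ (i,i) + (- A $$ (k,i)) * A $$ (i,k)"
    unfolding u_def using sum_delta2[OF ijk(1) ijk(3), of "A $$ (k,k)" "- A $$ (k,i)" "\<lambda>m. A $$ (i,m)"]
    by (simp add: mult.commute)
  also have "(\<Sum>m<d. A $$ (k,m) * u m) = A $$ (k,k) * A $$ (k,i) + (- A $$ (k,i)) * A $$ (k,k)"
    unfolding u_def using sum_delta2[OF ijk(1) ijk(3), of "A $$ (k,k)" "- A $$ (k,i)" "\<lambda>m. A $$ (k,m)"]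
    by (simp add: mult.commute)
  finally have "Bf A d u u = 0" using rel by (simp add: algebra_simps)
  then have "Bf A d u (\<lambda>m. if m = j then 1 else 0) = 0" by (rule Bf_zero[OF psd])
  moreover have "Bf A d u (\<lambda>m. if m = j then 1 else 0) =
      cnj (A $$ (k,k)) * (\<Sum>m<d. A $$ (i,m) * (if m = j then 1 else 0)) + cnj (- A $$ (k,i)) * (\<Sum>m<d. A $$ (k,m) * (if m = j then 1 else 0))"
    unfolding u_def by (rule Bf_left2[OF ijk(1) ijk(3)])
  moreover have "(\<Sum>m<d. A $$ (i,m) * (if m = j then 1 else 0)) = A $$ (i,j)"
    by (rule sum_delta1[OF ijk(2)])
  moreover have "(\<Sum>m<d. A $$ (k,m) * (if m = j then 1 else 0)) = A $$ (k,j)"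
    by (rule sum_delta1[OF ijk(2)])
  ultimately have "cnj (A $$ (k,k)) * A $$ (i,j) - cnj (A $$ (k,i)) * A $$ (k,j) = 0" by simp
  then show ?thesis using herm[OF ijk(3) ijk(3)] herm[OF ijk(3) ijk(1)] by simp
qed



lemma diag_mult_left:
  assumes "A \<in> carrier_mat d d"
  shows "mat d d (\<lambda>(i,j). if i = j then s i else 0) * A = mat d d (\<lambda>(i,j). s i * A $$ (i,j))"
proof (rule eq_matI)
  fix i j assume "i < dim_row (mat d d (\<lambda>(i,j). s i * A $$ (i,j)))" "j < dim_col (mat d d (\<lambda>(i,j). s i * A $$ (i,j)))"
  then have ij: "i < d" "j < d" by auto
  then show "(mat d d (\<lambda>(i,j). if i = j then s i else 0) * A) $$ (i,j) = mat d d (\<lambda>(i,j). s i * A $$ (i,j)) $$ (i,j)"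
    using assms by (simp add: scalar_prod_def if_mult_zero sum.delta)
qed (use assms in auto)

lemma diag_mult_right:
  assumes "A \<in> carrier_mat d d"
  shows "A * mat d d (\<lambda>(i,j). if i = j then s i else 0) = mat d d (\<lambda>(i,j). A $$ (i,j) * s j)"
proof (rule eq_matI)
  fix i j assume "i < dim_row (mat d d (\<lambda>(i,j). A $$ (i,j) * s j))" "j < dim_col (mat d d (\<lambda>(i,j). A $$ (i,j) * s j))"
  then have ij: "i < d" "j < d" by auto
  then show "(A * mat d d (\<lambda>(i,j). if i = j then s i else 0)) $$ (i,j) = mat d d (\<lambda>(i,j). A $$ (i,j) * s j) $$ (i,j)"
    using assms by (simp add: scalar_prod_def mult_if_zero sum.delta')
qed (use assms in auto)

lemma proj_both:
  assumes "A \<in> carrier_mat d d"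
  shows "proj d I * A * proj d I = mat d d (\<lambda>(i,j). if i \<in> I \<and> j \<in> I then A $$ (i,j) else 0)"
proof -
  have "proj d I * A = mat d d (\<lambda>(i,j). if i \<in> I then A $$ (i,j) else 0)" by (rule proj_mult_left[OF assms])
  moreover have "mat d d (\<lambda>(i,j). if i \<in> I then A $$ (i,j) else 0) * proj d I
     = mat d d (\<lambda>(i,j). if j \<in> I then mat d d (\<lambda>(i,j). if i \<in> I then A $$ (i,j) else 0) $$ (i,j) else 0)"
    by (rule proj_mult_right) simp
  ultimately show ?thesis by (auto intro!: eq_matI)
qed

lemma quad_delta:
  assumes "A \<in> carrier_mat d d" "i < d"
  shows "quad_form A (vec d (\<lambda>l. 1 * (if l = i then 1 else 0) + 0 * (if l = i then 1 else 0))) = A $$ (i,i)"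
proof -
  have "quad_form A (vec d (\<lambda>l. 1 * (if l = i then 1 else 0) + 0 * (if l = i then 1 else 0)))
     = Bf A d (\<lambda>l. 1 * (if l = i then 1 else 0) + 0 * (if l = i then 1 else 0)) (\<lambda>l. 1 * (if l = i then 1 else 0) + 0 * (if l = i then 1 else 0))"
    by (rule quad_Bf[OF assms(1)])
  also have "\<dots> = cnj 1 * (\<Sum>m<d. A $$ (i,m) * (\<lambda>l. 1 * (if l = i then 1 else 0) + 0 * (if l = i then 1 else 0)) m)
       + cnj 0 * (\<Sum>m<d. A $$ (i,m) * (\<lambda>l. 1 * (if l = i then 1 else 0) + 0 * (if l = i then 1 else 0)) m)"
    by (rule Bf_left2[OF assms(2) assms(2)])
  also have "\<dots> = A $$ (i,i)" using sum_delta1[OF assms(2), of "\<lambda>m. A $$ (i,m)"] by simp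
  finally show ?thesis .
qed

theorem lemma5:
  fixes d :: nat and \<rho> :: "complex mat"
  assumes "density_mat d \<rho>"
    and "pd_mat d (dephase d \<rho>)"
  shows "l_val d \<rho> = Max ((\<lambda>i. card {j \<in> {0..<d}. cmod (Rmat d \<rho> $$ (i, j)) = 1}) ` {0..<d})"
proof -
  have psd: "psd_mat d \<rho>" using assms(1) unfolding density_mat_def by blast
  have herm: "hermitian_mat d \<rho>" using psd unfolding psd_mat_def by blast
  have car: "\<rho> \<in> carrier_mat d d" using herm unfolding hermitian_mat_def by blast
  have hc: "\<And>a b. a < d \<Longrightarrow> b < d \<Longrightarrow> cnj (\<rho> $$ (a,b)) = \<rho> $$ (b,a)"
    using herm unfolding hermitian_mat_def by (metis complex_cnj_cnj)
  have d0: "d > 0"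
  proof (rule ccontr)
    assume "\<not> d > 0"
    then have "d = 0" by simp
    then show False using assms(1) unfolding density_mat_def by simp
  qed
  define p where "p i = Re (\<rho> $$ (i,i))" for i
  have Dcar: "dephase d \<rho> \<in> carrier_mat d d" unfolding dephase_def by simp
  have pp: "p i > 0" "\<rho> $$ (i,i) = of_real (p i)" if i: "i < d" for i
  proof -
    have "Re (quad_form (dephase d \<rho>) (vec d (\<lambda>l. 1 * (if l = i then 1 else 0) + 0 * (if l = i then 1 else 0)))) > 0"
    proof -
      let ?v = "vec d (\<lambda>l. 1 * (if l = i then 1 else 0) + 0 * (if l = i then 1 else 0)) :: complex vec"
      have vc: "?v \<in> carrier_vec d" by simp
      have "?v $ i = 1" using i by simp
      moreover have "?v = 0\<^sub>v d \<Longrightarrow> ?v $ i = 0" using i by (simp only: index_zero_vec(1))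
      ultimately have "?v \<noteq> 0\<^sub>v d" by force
      then show ?thesis using assms(2) vc unfolding pd_mat_def by blast
    qed
    then show "p i > 0" unfolding quad_delta[OF Dcar i] p_def unfolding dephase_def using i by simp
    have "cnj (\<rho> $$ (i,i)) = \<rho> $$ (i,i)" using hc[OF i i] .
    then have "Im (\<rho> $$ (i,i)) = 0" by (metis Reals_cnj_iff complex_is_Real_iff)
    then show "\<rho> $$ (i,i) = of_real (p i)" unfolding p_def by (simp add: complex_eq_iff)
  qed
  have nz: "\<rho> $$ (i,i) \<noteq> 0" if "i < d" for i using pp[OF that] by simp
  define rel where "rel i j \<longleftrightarrow> \<rho> $$ (i,j) * \<rho> $$ (j,i) = \<rho> $$ (i,i) * \<rho> $$ (j,j)" for i j
  have rsym: "rel i j \<Longrightarrow> rel j i" for i j unfolding rel_def by (simp add: mult.commute)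
  have rrefl: "rel i i" for i unfolding rel_def by simp
  have rtrans: "rel i j" if "rel i k" "rel j k" "i < d" "j < d" "k < d" for i j k
  proof -
    have 1: "\<rho> $$ (k,k) * \<rho> $$ (i,j) = \<rho> $$ (i,k) * \<rho> $$ (k,j)"
      using claim[OF psd that(3,4,5)] that(1) unfolding rel_def by blast
    have 2: "\<rho> $$ (k,k) * \<rho> $$ (j,i) = \<rho> $$ (j,k) * \<rho> $$ (k,i)"
      using claim[OF psd that(4,3,5)] that(2) unfolding rel_def by blast
    have "(\<rho> $$ (k,k) * \<rho> $$ (k,k)) * (\<rho> $$ (i,j) * \<rho> $$ (j,i))
        = (\<rho> $$ (k,k) * \<rho> $$ (i,j)) * (\<rho> $$ (k,k) * \<rho> $$ (j,i))" by (simp add: ac_simps)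
    also have "\<dots> = (\<rho> $$ (i,k) * \<rho> $$ (k,j)) * (\<rho> $$ (j,k) * \<rho> $$ (k,i))" unfolding 1 2 ..
    also have "\<dots> = (\<rho> $$ (i,k) * \<rho> $$ (k,i)) * (\<rho> $$ (j,k) * \<rho> $$ (k,j))" by (simp add: ac_simps)
    also have "\<dots> = (\<rho> $$ (k,k) * \<rho> $$ (k,k)) * (\<rho> $$ (i,i) * \<rho> $$ (j,j))"
      using that(1,2) unfolding rel_def by (simp add: ac_simps)
    finally show ?thesis unfolding rel_def using nz[OF that(5)] by simp
  qed
  have rank1: "mrank d (proj d I * \<rho> * proj d I) = 1 \<longleftrightarrow> I \<noteq> {} \<and> (\<forall>i\<in>I. \<forall>j\<in>I. rel i j)"
    if I: "I \<subseteq> {0..<d}" for I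
  proof -
    define M where "M = mat d d (\<lambda>(i,j). if i \<in> I \<and> j \<in> I then \<rho> $$ (i,j) else 0)"
    have MM: "proj d I * \<rho> * proj d I = M" unfolding M_def by (rule proj_both[OF car])
    have Mc: "M \<in> carrier_mat d d" unfolding M_def by simp
    have Me: "M $$ (i,j) = (if i \<in> I \<and> j \<in> I then \<rho> $$ (i,j) else 0)" if "i < d" "j < d" for i j
      unfolding M_def using that by simp
    show ?thesis
    proof
      assume r1: "mrank d (proj d I * \<rho> * proj d I) = 1"
      then have r1': "vec_space.rank d M = 1" unfolding MM mrank_def .
      show "I \<noteq> {} \<and> (\<forall>i\<in>I. \<forall>j\<in>I. rel i j)"
      proof (intro conjI ballI)
        show "I \<noteq> {}"
        proof
          assume "I = {}"
          then have "M = 0\<^sub>m d d" unfolding M_def by (auto intro!: eq_matI)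
          then have "vec_space.rank d M = 0" using vec_space.rank_0I by metis
          then show False using r1' by simp
        qed
        have rr: "rel i j" if "i \<in> I" "j \<in> I" "i < j" for i j
        proof (rule ccontr)
          assume "\<not> rel i j"
          then have "M $$ (i,i) * M $$ (j,j) - M $$ (i,j) * M $$ (j,i) \<noteq> 0"
            using Me that I unfolding rel_def by auto
          from rank_ge2[OF Mc that(3) _ this] that I have "2 \<le> vec_space.rank d M" by auto
          then show False using r1' by simp
        qed
        fix i j assume "i \<in> I" "j \<in> I"
        then show "rel i j"
        proof (cases i j rule: linorder_cases)
          case less then show ?thesis using rr \<open>i \<in> I\<close> \<open>j \<in> I\<close> by blast
        next
          case equal then show ?thesis using rrefl by simp
        next
          case greater then show ?thesis using rr \<open>i \<in> I\<close> \<open>j \<in> I\<close> rsym by blast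
        qed
      qed
    next
      assume h: "I \<noteq> {} \<and> (\<forall>i\<in>I. \<forall>j\<in>I. rel i j)"
      then obtain k where k: "k \<in> I" by blast
      have kd: "k < d" using k I by auto
      have "1 \<le> vec_space.rank d M"
        by (rule rank_ge1[OF Mc kd]) (use Me kd k nz in simp)
      moreover have "vec_space.rank d M \<le> 1"
      proof (rule vec_space.rank_le_1_product_entries[where f = "\<lambda>r. if r \<in> I then \<rho> $$ (r,k) else 0"
            and g = "\<lambda>c. if c \<in> I then \<rho> $$ (k,c) / \<rho> $$ (k,k) else 0", OF Mc])
        fix r c assume "r < dim_row M" "c < dim_col M"
        then have rc: "r < d" "c < d" using Mc by auto
        show "M $$ (r,c) = (if r \<in> I then \<rho> $$ (r,k) else 0) * (if c \<in> I then \<rho> $$ (k,c) / \<rho> $$ (k,k) else 0)"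
        proof (cases "r \<in> I \<and> c \<in> I")
          case True
          then have "rel r k" using h k by blast
          then have "\<rho> $$ (k,k) * \<rho> $$ (r,c) = \<rho> $$ (r,k) * \<rho> $$ (k,c)"
            using claim[OF psd rc kd] unfolding rel_def by blast
          then show ?thesis using True Me[OF rc] nz[OF kd] by (simp add: field_simps)
        next
          case False
          then show ?thesis using Me[OF rc] by auto
        qed
      qed
      ultimately show "mrank d (proj d I * \<rho> * proj d I) = 1" unfolding MM mrank_def by simp
    qed
  qed
  have rankD: "mrank d (proj d I * dephase d \<rho> * proj d I) = card I" if I: "I \<subseteq> {0..<d}" for I
  proof -
    have "proj d I * dephase d \<rho> * proj d I = mat d d (\<lambda>(i,j). if i = j \<and> i \<in> I then \<rho> $$ (i,i) else 0)"
      unfolding proj_both[OF Dcar] by (auto intro!: eq_matI simp: dephase_def)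
    moreover have "finite I" using I finite_subset by blast
    moreover have "vec_space.rank d (mat d d (\<lambda>(i,j). if i = j \<and> i \<in> I then \<rho> $$ (i,i) else 0)) \<le> card I"
      by (rule rank_diag_le) (use I finite_subset in blast)
    moreover have "card I \<le> vec_space.rank d (mat d d (\<lambda>(i,j). if i = j \<and> i \<in> I then \<rho> $$ (i,i) else 0))"
      by (rule rank_diag_ge[OF I]) (use nz I in auto)
    ultimately show ?thesis unfolding mrank_def by simp
  qed
  have Rm: "cmod (Rmat d \<rho> $$ (i,j)) = 1 \<longleftrightarrow> rel i j" if ij: "i < d" "j < d" for i j
  proof -
    define s where "s i = complex_of_real (1 / sqrt (p i))" for i
    have "dephase_inv_sqrt d \<rho> = mat d d (\<lambda>(i,j). if i = j then s i else 0)"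
      unfolding dephase_inv_sqrt_def s_def p_def by simp
    then have "Rmat d \<rho> = mat d d (\<lambda>(i,j). s i * \<rho> $$ (i,j) * s j)"
      unfolding Rmat_def using car
      by (simp add: diag_mult_left diag_mult_right, intro eq_matI, auto)
    then have "Rmat d \<rho> $$ (i,j) = s i * \<rho> $$ (i,j) * s j" using ij by simp
    then have "cmod (Rmat d \<rho> $$ (i,j)) = cmod (\<rho> $$ (i,j)) / (sqrt (p i) * sqrt (p j))"
      unfolding s_def using pp(1)[OF ij(1)] pp(1)[OF ij(2)] by (simp add: norm_mult norm_divide)
    then have "cmod (Rmat d \<rho> $$ (i,j)) = 1 \<longleftrightarrow> cmod (\<rho> $$ (i,j)) = sqrt (p i * p j)"
      using pp(1)[OF ij(1)] pp(1)[OF ij(2)] by (simp add: real_sqrt_mult, metis)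
    also have "\<dots> \<longleftrightarrow> cmod (\<rho> $$ (i,j)) ^ 2 = p i * p j"
    proof
      have q0: "p i * p j \<ge> 0" using pp(1)[OF ij(1)] pp(1)[OF ij(2)] by simp
      assume "cmod (\<rho> $$ (i,j)) = sqrt (p i * p j)"
      then show "cmod (\<rho> $$ (i,j)) ^ 2 = p i * p j" using q0 by simp
    next
      assume "cmod (\<rho> $$ (i,j)) ^ 2 = p i * p j"
      then show "cmod (\<rho> $$ (i,j)) = sqrt (p i * p j)" using real_sqrt_unique[of "cmod (\<rho> $$ (i,j))" "p i * p j"] by simp
    qed
    also have "\<dots> \<longleftrightarrow> rel i j"
    proof -
      have "\<rho> $$ (i,j) * \<rho> $$ (j,i) = of_real (cmod (\<rho> $$ (i,j)) ^ 2)"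
        using hc[OF ij] complex_norm_square[of "\<rho> $$ (i,j)"] by simp
      moreover have "\<rho> $$ (i,i) * \<rho> $$ (j,j) = of_real (p i * p j)" using pp(2)[OF ij(1)] pp(2)[OF ij(2)] by simp
      ultimately show ?thesis unfolding rel_def by (metis of_real_eq_iff)
    qed
    finally show ?thesis .
  qed
  define C where "C i = {j \<in> {0..<d}. rel i j}" for i
  have Ceq: "{j \<in> {0..<d}. cmod (Rmat d \<rho> $$ (i, j)) = 1} = C i" if "i < d" for i
    unfolding C_def using Rm[OF that] by auto
  define S1 where "S1 = {mrank d (proj d I * dephase d \<rho> * proj d I) | I.
       I \<subseteq> {0..<d} \<and> mrank d (proj d I * \<rho> * proj d I) = 1}"
  define S2 where "S2 = (\<lambda>i. card (C i)) ` {0..<d}"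
  have lv: "l_val d \<rho> = Max S1" unfolding l_val_def S1_def ..
  have rv: "(\<lambda>i. card {j \<in> {0..<d}. cmod (Rmat d \<rho> $$ (i, j)) = 1}) ` {0..<d} = S2"
    unfolding S2_def using Ceq by (intro image_cong refl) auto
  have S1eq: "S1 = {card I | I. I \<subseteq> {0..<d} \<and> I \<noteq> {} \<and> (\<forall>i\<in>I. \<forall>j\<in>I. rel i j)}"
  proof -
    have "(\<exists>I. x = mrank d (proj d I * dephase d \<rho> * proj d I) \<and> I \<subseteq> {0..<d} \<and> mrank d (proj d I * \<rho> * proj d I) = 1)
      \<longleftrightarrow> (\<exists>I. x = card I \<and> I \<subseteq> {0..<d} \<and> I \<noteq> {} \<and> (\<forall>i\<in>I. \<forall>j\<in>I. rel i j))" for x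
    proof
      assume "\<exists>I. x = mrank d (proj d I * dephase d \<rho> * proj d I) \<and> I \<subseteq> {0..<d} \<and> mrank d (proj d I * \<rho> * proj d I) = 1"
      then obtain I where I: "x = mrank d (proj d I * dephase d \<rho> * proj d I)" "I \<subseteq> {0..<d}" "mrank d (proj d I * \<rho> * proj d I) = 1" by blast
      have "x = card I" using I(1) rankD[OF I(2)] by simp
      moreover have "I \<noteq> {} \<and> (\<forall>i\<in>I. \<forall>j\<in>I. rel i j)" using rank1[OF I(2)] I(3) by blast
      ultimately show "\<exists>I. x = card I \<and> I \<subseteq> {0..<d} \<and> I \<noteq> {} \<and> (\<forall>i\<in>I. \<forall>j\<in>I. rel i j)" using I(2) by blast
    next
      assume "\<exists>I. x = card I \<and> I \<subseteq> {0..<d} \<and> I \<noteq> {} \<and> (\<forall>i\<in>I. \<forall>j\<in>I. rel i j)"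
      then obtain I where I: "x = card I" "I \<subseteq> {0..<d}" "I \<noteq> {} \<and> (\<forall>i\<in>I. \<forall>j\<in>I. rel i j)" by blast
      have "x = mrank d (proj d I * dephase d \<rho> * proj d I)" using I(1) rankD[OF I(2)] by simp
      moreover have "mrank d (proj d I * \<rho> * proj d I) = 1" using rank1[OF I(2)] I(3) by blast
      ultimately show "\<exists>I. x = mrank d (proj d I * dephase d \<rho> * proj d I) \<and> I \<subseteq> {0..<d} \<and> mrank d (proj d I * \<rho> * proj d I) = 1" using I(2) by blast
    qed
    then show ?thesis unfolding S1_def by blast
  qed
  have fin1: "finite S1"
  proof -
    have "S1 \<subseteq> card ` Pow {0..<d}" unfolding S1eq by auto
    then show ?thesis by (rule finite_subset) simp
  qed
  have fin2: "finite S2" unfolding S2_def by simp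
  have ne2: "S2 \<noteq> {}" unfolding S2_def using d0 by auto
  have CI: "C i \<subseteq> {0..<d} \<and> C i \<noteq> {} \<and> (\<forall>a\<in>C i. \<forall>b\<in>C i. rel a b)" if "i < d" for i
  proof (intro conjI ballI)
    show "C i \<subseteq> {0..<d}" unfolding C_def by auto
    show "C i \<noteq> {}" unfolding C_def using that rrefl by auto
    fix a b assume "a \<in> C i" "b \<in> C i"
    then show "rel a b" unfolding C_def using rtrans[of a i b] rsym that by auto
  qed
  have sub: "S2 \<subseteq> S1"
  proof
    fix x assume "x \<in> S2"
    then obtain i where i: "i < d" "x = card (C i)" unfolding S2_def by auto
    then show "x \<in> S1" unfolding S1eq using CI[OF i(1)] by blast
  qed
  have dom: "\<exists>y\<in>S2. x \<le> y" if "x \<in> S1" for x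
  proof -
    from that obtain I where I: "x = card I" "I \<subseteq> {0..<d}" "I \<noteq> {}" "\<forall>i\<in>I. \<forall>j\<in>I. rel i j"
      unfolding S1eq by blast
    then obtain i where i: "i \<in> I" by blast
    have id: "i < d" using i I by auto
    have "I \<subseteq> C i" unfolding C_def using I i by auto
    then have "card I \<le> card (C i)" by (rule card_mono[rotated]) (simp add: C_def)
    then show ?thesis unfolding S2_def using id I by auto
  qed
  have ne1: "S1 \<noteq> {}" using sub ne2 by blast
  have "Max S1 = Max S2"
  proof (rule antisym)
    obtain y where "y \<in> S2" "Max S1 \<le> y" using dom[OF Max_in[OF fin1 ne1]] by blast
    then show "Max S1 \<le> Max S2" using Max_ge[OF fin2] by (meson order_trans)
    show "Max S2 \<le> Max S1" using Max_in[OF fin2 ne2] sub Max_ge[OF fin1] by blast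
  qed
  then show ?thesis using lv rv by simp
qed

end
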